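(* Let $R$ be a ring, $\phi:M\to M'$ an epimorphism of left $R$-modules and $N$ a submodule of $M$ with $N\supseteq\ker\phi$. Then: (i) if $\beta^s_{co}(N)=\langle E_M(N)\rangle$, then $\beta^s_{co}(\phi(N))=\langle E_{M'}(\phi(N))\rangle$; (ii) if $N'$ is a submodule of $M'$ with $\beta^s_{co}(N')=\langle E_{M'}(N')\rangle$, then $\beta^s_{co}(\phi^{-1}(N'))=\langle E_M(\phi^{-1}(N'))\rangle$; (iii) if $\beta^s(N)=\langle E_M(N)\rangle$, then $\beta^s(\phi(N))=\langle E_{M'}(\phi(N))\rangle$; (iv) if $N'$ is a submodule of $M'$ with $\beta^s(N')=\langle E_{M'}(N')\rangle$, then $\beta^s(\phi^{-1}(N'))=\langle E_M(\phi^{-1}(N'))\rangle$.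
   Context: Rings are associative with identity; modules are unital left modules. For a module $X$ and submodule $K$: a submodule $P$ of $X$ is prime if $RX\not\subseteq P$ and for every ideal $A$ of $R$ and submodule $L$ with $AL\subseteq P$, $L\subseteq P$ or $AX\subseteq P$; completely prime if $RX\not\subseteq P$ and $rx\in P$ implies $x\in P$ or $rX\subseteq P$. $\beta^s(K)$ (resp. $\beta^s_{co}(K)$) is the intersection of all prime (resp. completely prime) submodules of $X$ containing $K$ ($=X$ if none), computed in the ambient module of $K$. $E_X(K)=\{rx: r\in R,x\in X, r^kx\in K\text{ for some }k\in\mathbb N\}$ and $\langle E_X(K)\rangle$ is the submodule it generates. *)

theory Defs
  imports "HOL-Algebra.Module" "HOL-Algebra.Ideal"
begin

(* Left unital module over an arbitrary (associative, unital, not necessarily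
   commutative) ring; same axioms as HOL-Algebra's module but with ring R. *)
locale lmodule = R?: ring R + M?: abelian_group M
  for R :: "('r, 'c) ring_scheme" (structure) and M :: "('r, 'a, 'd) module_scheme" (structure) +
  assumes smult_closed:
      "\<lbrakk> a \<in> carrier R; x \<in> carrier M \<rbrakk> \<Longrightarrow> a \<odot>\<^bsub>M\<^esub> x \<in> carrier M"
    and smult_l_distr:
      "\<lbrakk> a \<in> carrier R; b \<in> carrier R; x \<in> carrier M \<rbrakk> \<Longrightarrow>
      (a \<oplus> b) \<odot>\<^bsub>M\<^esub> x = a \<odot>\<^bsub>M\<^esub> x \<oplus>\<^bsub>M\<^esub> b \<odot>\<^bsub>M\<^esub> x"
    and smult_r_distr:
      "\<lbrakk> a \<in> carrier R; x \<in> carrier M; y \<in> carrier M \<rbrakk> \<Longrightarrow>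
      a \<odot>\<^bsub>M\<^esub> (x \<oplus>\<^bsub>M\<^esub> y) = a \<odot>\<^bsub>M\<^esub> x \<oplus>\<^bsub>M\<^esub> a \<odot>\<^bsub>M\<^esub> y"
    and smult_assoc1:
      "\<lbrakk> a \<in> carrier R; b \<in> carrier R; x \<in> carrier M \<rbrakk> \<Longrightarrow>
      (a \<otimes> b) \<odot>\<^bsub>M\<^esub> x = a \<odot>\<^bsub>M\<^esub> (b \<odot>\<^bsub>M\<^esub> x)"
    and smult_one:
      "x \<in> carrier M \<Longrightarrow> \<one> \<odot>\<^bsub>M\<^esub> x = x"

definition lsubmodule :: "('r,'c) ring_scheme \<Rightarrow> ('r,'a,'d) module_scheme \<Rightarrow> 'a set \<Rightarrow> bool" where
  "lsubmodule R X L \<longleftrightarrow>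
     L \<subseteq> carrier X \<and> \<zero>\<^bsub>X\<^esub> \<in> L \<and>
     (\<forall>x\<in>L. \<forall>y\<in>L. x \<oplus>\<^bsub>X\<^esub> y \<in> L) \<and>
     (\<forall>x\<in>L. \<ominus>\<^bsub>X\<^esub> x \<in> L) \<and>
     (\<forall>r\<in>carrier R. \<forall>x\<in>L. r \<odot>\<^bsub>X\<^esub> x \<in> L)"

definition gen_submodule :: "('r,'c) ring_scheme \<Rightarrow> ('r,'a,'d) module_scheme \<Rightarrow> 'a set \<Rightarrow> 'a set" where
  "gen_submodule R X S = \<Inter> {L. lsubmodule R X L \<and> S \<subseteq> L}"

definition RX_sub :: "('r,'c) ring_scheme \<Rightarrow> ('r,'a,'d) module_scheme \<Rightarrow> 'a set \<Rightarrow> bool" where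
  "RX_sub R X P \<longleftrightarrow> (\<forall>r\<in>carrier R. \<forall>x\<in>carrier X. r \<odot>\<^bsub>X\<^esub> x \<in> P)"

(* prime submodule; "AL \<subseteq> P" for the submodule P is expressed as: every a l lies in P *)
definition prime_submodule :: "('r,'c) ring_scheme \<Rightarrow> ('r,'a,'d) module_scheme \<Rightarrow> 'a set \<Rightarrow> bool" where
  "prime_submodule R X P \<longleftrightarrow>
     lsubmodule R X P \<and> \<not> RX_sub R X P \<and>
     (\<forall>A L. ideal A R \<longrightarrow> lsubmodule R X L \<longrightarrow>
        (\<forall>a\<in>A. \<forall>l\<in>L. a \<odot>\<^bsub>X\<^esub> l \<in> P) \<longrightarrow>
        (L \<subseteq> P \<or> (\<forall>a\<in>A. \<forall>x\<in>carrier X. a \<odot>\<^bsub>X\<^esub> x \<in> P)))"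

definition cprime_submodule :: "('r,'c) ring_scheme \<Rightarrow> ('r,'a,'d) module_scheme \<Rightarrow> 'a set \<Rightarrow> bool" where
  "cprime_submodule R X P \<longleftrightarrow>
     lsubmodule R X P \<and> \<not> RX_sub R X P \<and>
     (\<forall>r\<in>carrier R. \<forall>x\<in>carrier X. r \<odot>\<^bsub>X\<^esub> x \<in> P \<longrightarrow>
        (x \<in> P \<or> (\<forall>y\<in>carrier X. r \<odot>\<^bsub>X\<^esub> y \<in> P)))"

definition beta_s :: "('r,'c) ring_scheme \<Rightarrow> ('r,'a,'d) module_scheme \<Rightarrow> 'a set \<Rightarrow> 'a set" where
  "beta_s R X K =
    (if {P. prime_submodule R X P \<and> K \<subseteq> P} = {} then carrier X
     else \<Inter> {P. prime_submodule R X P \<and> K \<subseteq> P})"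

definition beta_co :: "('r,'c) ring_scheme \<Rightarrow> ('r,'a,'d) module_scheme \<Rightarrow> 'a set \<Rightarrow> 'a set" where
  "beta_co R X K =
    (if {P. cprime_submodule R X P \<and> K \<subseteq> P} = {} then carrier X
     else \<Inter> {P. cprime_submodule R X P \<and> K \<subseteq> P})"

definition E_set :: "('r,'c) ring_scheme \<Rightarrow> ('r,'a,'d) module_scheme \<Rightarrow> 'a set \<Rightarrow> 'a set" where
  "E_set R X K = {r \<odot>\<^bsub>X\<^esub> x | r x. r \<in> carrier R \<and> x \<in> carrier X \<and>
       (\<exists>k::nat. k \<ge> 1 \<and> (r [^]\<^bsub>R\<^esub> k) \<odot>\<^bsub>X\<^esub> x \<in> K)}"

definition lmod_hom :: "('r,'c) ring_scheme \<Rightarrow> ('r,'a,'d) module_scheme \<Rightarrow> ('r,'b,'e) module_scheme \<Rightarrow> ('a \<Rightarrow> 'b) \<Rightarrow> bool" where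
  "lmod_hom R M M' f \<longleftrightarrow>
     (\<forall>x\<in>carrier M. f x \<in> carrier M') \<and>
     (\<forall>x\<in>carrier M. \<forall>y\<in>carrier M. f (x \<oplus>\<^bsub>M\<^esub> y) = f x \<oplus>\<^bsub>M'\<^esub> f y) \<and>
     (\<forall>r\<in>carrier R. \<forall>x\<in>carrier M. f (r \<odot>\<^bsub>M\<^esub> x) = r \<odot>\<^bsub>M'\<^esub> f x)"

definition lmod_epi :: "('r,'c) ring_scheme \<Rightarrow> ('r,'a,'d) module_scheme \<Rightarrow> ('r,'b,'e) module_scheme \<Rightarrow> ('a \<Rightarrow> 'b) \<Rightarrow> bool" where
  "lmod_epi R M M' f \<longleftrightarrow> lmod_hom R M M' f \<and> f ` carrier M = carrier M'"

definition lmod_ker :: "('r,'a,'d) module_scheme \<Rightarrow> ('r,'b,'e) module_scheme \<Rightarrow> ('a \<Rightarrow> 'b) \<Rightarrow> 'a set" where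
  "lmod_ker M M' f = {x \<in> carrier M. f x = \<zero>\<^bsub>M'\<^esub>}"

definition lmod_preim :: "('r,'a,'d) module_scheme \<Rightarrow> ('a \<Rightarrow> 'b) \<Rightarrow> 'b set \<Rightarrow> 'a set" where
  "lmod_preim M f N' = {x \<in> carrier M. f x \<in> N'}"

end

theory Submission
  imports Defs
begin

lemma ideal_sub: "ideal A R \<Longrightarrow> A \<subseteq> carrier R"
  by (meson additive_subgroup.a_subset ideal_def)

lemma lsub_carrier: "lsubmodule R X L \<Longrightarrow> L \<subseteq> carrier X"
  by (simp add: lsubmodule_def)

lemma prime_sub: "prime_submodule R X P \<Longrightarrow> lsubmodule R X P"
  by (simp add: prime_submodule_def)

lemma prime_nRX: "prime_submodule R X P \<Longrightarrow> \<not> RX_sub R X P"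
  by (simp add: prime_submodule_def)

lemma cprime_sub: "cprime_submodule R X P \<Longrightarrow> lsubmodule R X P"
  by (simp add: cprime_submodule_def)

lemma cprime_nRX: "cprime_submodule R X P \<Longrightarrow> \<not> RX_sub R X P"
  by (simp add: cprime_submodule_def)

lemma prime_cond: "prime_submodule R X P \<Longrightarrow> ideal A R \<Longrightarrow> lsubmodule R X L \<Longrightarrow>
   (\<And>a l. a \<in> A \<Longrightarrow> l \<in> L \<Longrightarrow> a \<odot>\<^bsub>X\<^esub> l \<in> P) \<Longrightarrow>
   L \<subseteq> P \<or> (\<forall>a\<in>A. \<forall>x\<in>carrier X. a \<odot>\<^bsub>X\<^esub> x \<in> P)"
  unfolding prime_submodule_def by blast

lemma cprime_cond: "cprime_submodule R X P \<Longrightarrow> r \<in> carrier R \<Longrightarrow> x \<in> carrier X \<Longrightarrow>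
   r \<odot>\<^bsub>X\<^esub> x \<in> P \<Longrightarrow> x \<in> P \<or> (\<forall>y\<in>carrier X. r \<odot>\<^bsub>X\<^esub> y \<in> P)"
  unfolding cprime_submodule_def by blast

context lmodule
begin

lemma carrier_sub: "lsubmodule R M (carrier M)"
  by (auto simp: lsubmodule_def smult_closed)

lemma RX_sub_iff: "P \<subseteq> carrier M \<Longrightarrow> RX_sub R M P \<longleftrightarrow> carrier M \<subseteq> P"
  unfolding RX_sub_def
  by (metis R.one_closed smult_closed smult_one subset_iff)

lemma gen_sub: "S \<subseteq> carrier M \<Longrightarrow> lsubmodule R M (gen_submodule R M S)"
proof -
  assume S: "S \<subseteq> carrier M"
  define F where "F = {L. lsubmodule R M L \<and> S \<subseteq> L}"
  have cc: "carrier M \<in> F" using carrier_sub S F_def by auto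
  have FL: "\<And>L. L \<in> F \<Longrightarrow> lsubmodule R M L" using F_def by auto
  have g: "gen_submodule R M S = \<Inter> F" unfolding gen_submodule_def F_def by simp
  have "lsubmodule R M (\<Inter> F)" unfolding lsubmodule_def
  proof (intro conjI ballI)
    show "\<Inter> F \<subseteq> carrier M" using cc by (rule Inter_lower)
    show "\<zero>\<^bsub>M\<^esub> \<in> \<Inter> F" using FL unfolding lsubmodule_def by blast
    show "x \<oplus>\<^bsub>M\<^esub> y \<in> \<Inter> F" if "x \<in> \<Inter> F" "y \<in> \<Inter> F" for x y
      using that FL unfolding lsubmodule_def by blast
    show "\<ominus>\<^bsub>M\<^esub> x \<in> \<Inter> F" if "x \<in> \<Inter> F" for x
      using that FL unfolding lsubmodule_def by blast
    show "r \<odot>\<^bsub>M\<^esub> x \<in> \<Inter> F" if "r \<in> carrier R" "x \<in> \<Inter> F" for r x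
      using that FL unfolding lsubmodule_def by blast
  qed
  then show ?thesis using g by simp
qed

lemma gen_carrier: "S \<subseteq> carrier M \<Longrightarrow> gen_submodule R M S \<subseteq> carrier M"
  using gen_sub[of S] by (simp add: lsubmodule_def)

lemma gen_incl: "S \<subseteq> gen_submodule R M S"
  unfolding gen_submodule_def by auto

lemma gen_least: "lsubmodule R M L \<Longrightarrow> S \<subseteq> L \<Longrightarrow> gen_submodule R M S \<subseteq> L"
  unfolding gen_submodule_def by auto

lemma beta_s_carrier: "beta_s R M K \<subseteq> carrier M"
proof -
  have "\<And>P. prime_submodule R M P \<Longrightarrow> P \<subseteq> carrier M" by (simp add: prime_submodule_def lsubmodule_def)
  then show ?thesis unfolding beta_s_def by (simp split: if_split) blast
qed

lemma beta_co_carrier: "beta_co R M K \<subseteq> carrier M"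
proof -
  have "\<And>P. cprime_submodule R M P \<Longrightarrow> P \<subseteq> carrier M" by (simp add: cprime_submodule_def lsubmodule_def)
  then show ?thesis unfolding beta_co_def by (simp split: if_split) blast
qed

lemma E_incl: "K \<subseteq> carrier M \<Longrightarrow> K \<subseteq> E_set R M K"
proof
  fix x assume "K \<subseteq> carrier M" "x \<in> K"
  then have "x \<in> carrier M" by auto
  moreover have "(\<one> [^]\<^bsub>R\<^esub> (1::nat)) \<odot>\<^bsub>M\<^esub> x \<in> K" using \<open>x \<in> carrier M\<close> \<open>x \<in> K\<close> by (simp add: smult_one)
  moreover have "x = \<one> \<odot>\<^bsub>M\<^esub> x" using \<open>x \<in> carrier M\<close> by (simp add: smult_one)
  ultimately show "x \<in> E_set R M K" unfolding E_set_def
    using R.one_closed le_refl by blast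
qed

lemma E_carrier: "E_set R M K \<subseteq> carrier M"
  unfolding E_set_def using smult_closed by auto

end

locale epi = M: lmodule R M + M2: lmodule R M' for R M M' +
  fixes f assumes epi: "lmod_epi R M M' f"
begin

lemma f_closed: "x \<in> carrier M \<Longrightarrow> f x \<in> carrier M'"
  using epi unfolding lmod_epi_def lmod_hom_def by auto

lemma f_add: "x \<in> carrier M \<Longrightarrow> y \<in> carrier M \<Longrightarrow> f (x \<oplus>\<^bsub>M\<^esub> y) = f x \<oplus>\<^bsub>M'\<^esub> f y"
  using epi unfolding lmod_epi_def lmod_hom_def by auto

lemma f_smult: "r \<in> carrier R \<Longrightarrow> x \<in> carrier M \<Longrightarrow> f (r \<odot>\<^bsub>M\<^esub> x) = r \<odot>\<^bsub>M'\<^esub> f x"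
  using epi unfolding lmod_epi_def lmod_hom_def by auto

lemma f_surj: "f ` carrier M = carrier M'"
  using epi unfolding lmod_epi_def by auto

lemma f_zero: "f \<zero>\<^bsub>M\<^esub> = \<zero>\<^bsub>M'\<^esub>"
proof -
  have c: "f \<zero>\<^bsub>M\<^esub> \<in> carrier M'" using f_closed M.zero_closed by blast
  have "f \<zero>\<^bsub>M\<^esub> = f (\<zero>\<^bsub>M\<^esub> \<oplus>\<^bsub>M\<^esub> \<zero>\<^bsub>M\<^esub>)" using M.zero_closed M.l_zero by metis
  also have "\<dots> = f \<zero>\<^bsub>M\<^esub> \<oplus>\<^bsub>M'\<^esub> f \<zero>\<^bsub>M\<^esub>" using f_add M.zero_closed by blast
  finally have e: "f \<zero>\<^bsub>M\<^esub> = f \<zero>\<^bsub>M\<^esub> \<oplus>\<^bsub>M'\<^esub> f \<zero>\<^bsub>M\<^esub>" .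
  show ?thesis using M2.add.l_cancel_one[OF c c] e by metis
qed

lemma f_neg: "x \<in> carrier M \<Longrightarrow> f (\<ominus>\<^bsub>M\<^esub> x) = \<ominus>\<^bsub>M'\<^esub> f x"
proof -
  assume x: "x \<in> carrier M"
  have "f (\<ominus>\<^bsub>M\<^esub> x) \<oplus>\<^bsub>M'\<^esub> f x = \<zero>\<^bsub>M'\<^esub>"
    using f_add[of "\<ominus>\<^bsub>M\<^esub> x" x] x f_zero by (simp add: M.l_neg)
  then show ?thesis using x f_closed M2.minus_equality by (simp add: M.a_inv_closed)
qed

abbreviation ker where "ker \<equiv> lmod_ker M M' f"
abbreviation pre where "pre P \<equiv> lmod_preim M f P"

lemma ker_diff: "x \<in> carrier M \<Longrightarrow> q \<in> carrier M \<Longrightarrow> f x = f q \<Longrightarrow> x \<oplus>\<^bsub>M\<^esub> \<ominus>\<^bsub>M\<^esub> q \<in> ker"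
  unfolding lmod_ker_def using f_add f_neg f_closed
  by (simp add: M.a_inv_closed M2.r_neg)

lemma sub_closed_diff: "lsubmodule R M Q \<Longrightarrow> ker \<subseteq> Q \<Longrightarrow> x \<in> carrier M \<Longrightarrow> q \<in> Q \<Longrightarrow> f x = f q \<Longrightarrow> x \<in> Q"
proof -
  assume Q: "lsubmodule R M Q" "ker \<subseteq> Q" "x \<in> carrier M" "q \<in> Q" "f x = f q"
  then have qc: "q \<in> carrier M" unfolding lsubmodule_def by auto
  have d: "x \<oplus>\<^bsub>M\<^esub> \<ominus>\<^bsub>M\<^esub> q \<in> Q" using ker_diff Q qc by auto
  have "x = (x \<oplus>\<^bsub>M\<^esub> \<ominus>\<^bsub>M\<^esub> q) \<oplus>\<^bsub>M\<^esub> q"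
    using Q(3) qc by (simp add: M.a_assoc M.l_neg M.a_inv_closed)
  then show "x \<in> Q" using d Q(1,4) unfolding lsubmodule_def by metis
qed

lemma pre_image: "lsubmodule R M Q \<Longrightarrow> ker \<subseteq> Q \<Longrightarrow> pre (f ` Q) = Q"
proof
  assume Q: "lsubmodule R M Q" "ker \<subseteq> Q"
  show "pre (f ` Q) \<subseteq> Q"
  proof
    fix x assume "x \<in> pre (f ` Q)"
    then have x: "x \<in> carrier M" "f x \<in> f ` Q" unfolding lmod_preim_def by auto
    then obtain q where "q \<in> Q" "f x = f q" by auto
    then show "x \<in> Q" using sub_closed_diff[OF Q x(1)] by blast
  qed
  have "Q \<subseteq> carrier M" using Q(1) unfolding lsubmodule_def by blast
  then show "Q \<subseteq> pre (f ` Q)" unfolding lmod_preim_def by blast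
qed

lemma image_pre: "N' \<subseteq> carrier M' \<Longrightarrow> f ` pre N' = N'"
  unfolding lmod_preim_def using f_surj by auto

lemma sub_image: "lsubmodule R M Q \<Longrightarrow> lsubmodule R M' (f ` Q)"
  unfolding lsubmodule_def
proof (intro conjI ballI)
  assume Q: "Q \<subseteq> carrier M \<and> \<zero>\<^bsub>M\<^esub> \<in> Q \<and> (\<forall>x\<in>Q. \<forall>y\<in>Q. x \<oplus>\<^bsub>M\<^esub> y \<in> Q) \<and>
    (\<forall>x\<in>Q. \<ominus>\<^bsub>M\<^esub> x \<in> Q) \<and> (\<forall>r\<in>carrier R. \<forall>x\<in>Q. r \<odot>\<^bsub>M\<^esub> x \<in> Q)"
  show "f ` Q \<subseteq> carrier M'" using Q f_closed by auto
  show "\<zero>\<^bsub>M'\<^esub> \<in> f ` Q" using Q f_zero by (metis imageI)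
  show "x \<oplus>\<^bsub>M'\<^esub> y \<in> f ` Q" if "x \<in> f ` Q" "y \<in> f ` Q" for x y
    using that Q f_add by (smt (verit, best) image_iff subsetD)
  show "\<ominus>\<^bsub>M'\<^esub> x \<in> f ` Q" if "x \<in> f ` Q" for x
    using that Q f_neg by (smt (verit, best) image_iff subsetD)
  show "r \<odot>\<^bsub>M'\<^esub> x \<in> f ` Q" if "r \<in> carrier R" "x \<in> f ` Q" for r x
    using that Q f_smult by (smt (verit, best) image_iff subsetD)
qed

lemma sub_pre: "lsubmodule R M' P \<Longrightarrow> lsubmodule R M (pre P)"
  unfolding lsubmodule_def lmod_preim_def
  using f_add f_neg f_smult f_zero M.smult_closed
  by (auto simp: M.a_inv_closed)

lemma ker_pre: "lsubmodule R M' P \<Longrightarrow> ker \<subseteq> pre P"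
  unfolding lsubmodule_def lmod_preim_def lmod_ker_def by auto

lemma pre_carrier: "pre P \<subseteq> carrier M"
  unfolding lmod_preim_def by auto

lemma pre_RX: "P \<subseteq> carrier M' \<Longrightarrow> \<not> RX_sub R M' P \<Longrightarrow> \<not> RX_sub R M (pre P)"
proof
  assume P: "P \<subseteq> carrier M'" "\<not> RX_sub R M' P" and X: "RX_sub R M (pre P)"
  have c: "carrier M \<subseteq> pre P" using M.RX_sub_iff[OF pre_carrier] X by (rule iffD1)
  have "carrier M' \<subseteq> P"
  proof
    fix y assume "y \<in> carrier M'"
    then obtain x where "x \<in> carrier M" "y = f x" using f_surj by blast
    then show "y \<in> P" using c unfolding lmod_preim_def by blast
  qed
  then have "RX_sub R M' P" by (rule iffD2[OF M2.RX_sub_iff[OF P(1)]])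
  then show False using P(2) by contradiction
qed

lemma image_RX: "lsubmodule R M Q \<Longrightarrow> ker \<subseteq> Q \<Longrightarrow> \<not> RX_sub R M Q \<Longrightarrow> \<not> RX_sub R M' (f ` Q)"
proof
  assume Q: "lsubmodule R M Q" "ker \<subseteq> Q" "\<not> RX_sub R M Q" and X: "RX_sub R M' (f ` Q)"
  have fQ: "f ` Q \<subseteq> carrier M'" using sub_image[OF Q(1)] unfolding lsubmodule_def by (rule conjunct1)
  have Qc: "Q \<subseteq> carrier M" using Q(1) unfolding lsubmodule_def by (rule conjunct1)
  have c: "carrier M' \<subseteq> f ` Q" using M2.RX_sub_iff[OF fQ] X by (rule iffD1)
  have "carrier M \<subseteq> pre (f ` Q)"
  proof
    fix x assume "x \<in> carrier M"
    then show "x \<in> pre (f ` Q)" using c f_closed unfolding lmod_preim_def by blast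
  qed
  then have "carrier M \<subseteq> Q" using pre_image[OF Q(1,2)] by simp
  then have "RX_sub R M Q" by (rule iffD2[OF M.RX_sub_iff[OF Qc]])
  then show False using Q(3) by contradiction
qed

lemma prime_pre: "prime_submodule R M' P \<Longrightarrow> prime_submodule R M (pre P)"
proof -
  assume P: "prime_submodule R M' P"
  have Ps: "lsubmodule R M' P" and Pr: "\<not> RX_sub R M' P" using prime_sub[OF P] prime_nRX[OF P] by auto
  have Pc: "P \<subseteq> carrier M'" using lsub_carrier[OF Ps] .
  show ?thesis unfolding prime_submodule_def
  proof (intro conjI allI impI)
    show "lsubmodule R M (pre P)" using sub_pre Ps by auto
    show "\<not> RX_sub R M (pre P)" using pre_RX Pc Pr by auto
    fix A L assume A: "ideal A R" and L: "lsubmodule R M L"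
      and H: "\<forall>a\<in>A. \<forall>l\<in>L. a \<odot>\<^bsub>M\<^esub> l \<in> pre P"
    have Ac: "A \<subseteq> carrier R" using A ideal_sub by auto
    have Lc: "L \<subseteq> carrier M" using lsub_carrier[OF L] .
    have H': "a \<odot>\<^bsub>M'\<^esub> l \<in> P" if aA: "a \<in> A" and lL: "l \<in> f ` L" for a l
    proof -
      obtain x where x: "x \<in> L" "l = f x" using lL by blast
      have "a \<odot>\<^bsub>M\<^esub> x \<in> pre P" using H aA x(1) by blast
      then have "f (a \<odot>\<^bsub>M\<^esub> x) \<in> P" unfolding lmod_preim_def by blast
      moreover have "f (a \<odot>\<^bsub>M\<^esub> x) = a \<odot>\<^bsub>M'\<^esub> l" using f_smult aA Ac x Lc by blast
      ultimately show ?thesis by simp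
    qed
    have "f ` L \<subseteq> P \<or> (\<forall>a\<in>A. \<forall>x\<in>carrier M'. a \<odot>\<^bsub>M'\<^esub> x \<in> P)"
      using prime_cond[OF P A sub_image[OF L]] H' by blast
    then show "L \<subseteq> pre P \<or> (\<forall>a\<in>A. \<forall>x\<in>carrier M. a \<odot>\<^bsub>M\<^esub> x \<in> pre P)"
    proof
      assume "f ` L \<subseteq> P"
      then have "L \<subseteq> pre P" using Lc unfolding lmod_preim_def by blast
      then show ?thesis by blast
    next
      assume a: "\<forall>a\<in>A. \<forall>x\<in>carrier M'. a \<odot>\<^bsub>M'\<^esub> x \<in> P"
      have "\<forall>a\<in>A. \<forall>x\<in>carrier M. a \<odot>\<^bsub>M\<^esub> x \<in> pre P"
      proof (intro ballI)
        fix b x assume b: "b \<in> A" and x: "x \<in> carrier M"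
        have bc: "b \<in> carrier R" using b Ac by blast
        have "f (b \<odot>\<^bsub>M\<^esub> x) \<in> P" using a b f_closed[OF x] f_smult[OF bc x] by simp
        then show "b \<odot>\<^bsub>M\<^esub> x \<in> pre P" using M.smult_closed[OF bc x] unfolding lmod_preim_def by blast
      qed
      then show ?thesis by blast
    qed
  qed
qed

lemma cprime_pre: "cprime_submodule R M' P \<Longrightarrow> cprime_submodule R M (pre P)"
proof -
  assume P: "cprime_submodule R M' P"
  have Ps: "lsubmodule R M' P" and Pr: "\<not> RX_sub R M' P" using cprime_sub[OF P] cprime_nRX[OF P] by auto
  have Pc: "P \<subseteq> carrier M'" using lsub_carrier[OF Ps] .
  show ?thesis unfolding cprime_submodule_def
  proof (intro conjI ballI impI)
    show "lsubmodule R M (pre P)" using sub_pre Ps by auto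
    show "\<not> RX_sub R M (pre P)" using pre_RX Pc Pr by auto
    fix r x assume r: "r \<in> carrier R" and x: "x \<in> carrier M" and H: "r \<odot>\<^bsub>M\<^esub> x \<in> pre P"
    have "f (r \<odot>\<^bsub>M\<^esub> x) \<in> P" using H unfolding lmod_preim_def by blast
    then have "r \<odot>\<^bsub>M'\<^esub> f x \<in> P" using f_smult[OF r x] by simp
    then have "f x \<in> P \<or> (\<forall>y\<in>carrier M'. r \<odot>\<^bsub>M'\<^esub> y \<in> P)"
      using cprime_cond[OF P r f_closed[OF x]] by blast
    then show "x \<in> pre P \<or> (\<forall>y\<in>carrier M. r \<odot>\<^bsub>M\<^esub> y \<in> pre P)"
    proof
      assume "f x \<in> P" then show ?thesis using x unfolding lmod_preim_def by blast
    next
      assume a: "\<forall>y\<in>carrier M'. r \<odot>\<^bsub>M'\<^esub> y \<in> P"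
      have "\<forall>y\<in>carrier M. r \<odot>\<^bsub>M\<^esub> y \<in> pre P"
      proof
        fix y assume y: "y \<in> carrier M"
        have "f (r \<odot>\<^bsub>M\<^esub> y) \<in> P" using a f_closed[OF y] f_smult[OF r y] by simp
        then show "r \<odot>\<^bsub>M\<^esub> y \<in> pre P" using M.smult_closed[OF r y] unfolding lmod_preim_def by blast
      qed
      then show ?thesis by blast
    qed
  qed
qed

lemma prime_image: "prime_submodule R M Q \<Longrightarrow> ker \<subseteq> Q \<Longrightarrow> prime_submodule R M' (f ` Q)"
proof -
  assume Q: "prime_submodule R M Q" and K: "ker \<subseteq> Q"
  have Qs: "lsubmodule R M Q" and Qr: "\<not> RX_sub R M Q" using prime_sub[OF Q] prime_nRX[OF Q] by auto
  have pq: "pre (f ` Q) = Q" using pre_image[OF Qs K] .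
  show ?thesis unfolding prime_submodule_def
  proof (intro conjI allI impI)
    show "lsubmodule R M' (f ` Q)" using sub_image Qs by auto
    show "\<not> RX_sub R M' (f ` Q)" using image_RX Qs K Qr by auto
    fix A L assume A: "ideal A R" and L: "lsubmodule R M' L"
      and H: "\<forall>a\<in>A. \<forall>l\<in>L. a \<odot>\<^bsub>M'\<^esub> l \<in> f ` Q"
    have Ac: "A \<subseteq> carrier R" using A ideal_sub by auto
    have Lc: "L \<subseteq> carrier M'" using lsub_carrier[OF L] .
    have H': "a \<odot>\<^bsub>M\<^esub> l \<in> Q" if aA: "a \<in> A" and lL: "l \<in> pre L" for a l
    proof -
      have ac: "a \<in> carrier R" using aA Ac by blast
      have lc: "l \<in> carrier M" and fl: "f l \<in> L" using lL unfolding lmod_preim_def by auto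
      have "a \<odot>\<^bsub>M'\<^esub> f l \<in> f ` Q" using H aA fl by blast
      then have "f (a \<odot>\<^bsub>M\<^esub> l) \<in> f ` Q" using f_smult[OF ac lc] by simp
      then have "a \<odot>\<^bsub>M\<^esub> l \<in> pre (f ` Q)" using M.smult_closed[OF ac lc] unfolding lmod_preim_def by blast
      then show ?thesis using pq by simp
    qed
    have "pre L \<subseteq> Q \<or> (\<forall>a\<in>A. \<forall>x\<in>carrier M. a \<odot>\<^bsub>M\<^esub> x \<in> Q)"
      using prime_cond[OF Q A sub_pre[OF L]] H' by blast
    then show "L \<subseteq> f ` Q \<or> (\<forall>a\<in>A. \<forall>x\<in>carrier M'. a \<odot>\<^bsub>M'\<^esub> x \<in> f ` Q)"
    proof
      assume "pre L \<subseteq> Q"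
      then have "f ` pre L \<subseteq> f ` Q" by (rule image_mono)
      then show ?thesis using image_pre[OF Lc] by simp
    next
      assume a: "\<forall>a\<in>A. \<forall>x\<in>carrier M. a \<odot>\<^bsub>M\<^esub> x \<in> Q"
      have "\<forall>a\<in>A. \<forall>x\<in>carrier M'. a \<odot>\<^bsub>M'\<^esub> x \<in> f ` Q"
      proof (intro ballI)
        fix b y assume b: "b \<in> A" and y: "y \<in> carrier M'"
        have bc: "b \<in> carrier R" using b Ac by blast
        obtain x where x: "x \<in> carrier M" "y = f x" using y f_surj by blast
        have "b \<odot>\<^bsub>M\<^esub> x \<in> Q" using a b x(1) by blast
        then have "f (b \<odot>\<^bsub>M\<^esub> x) \<in> f ` Q" by (rule imageI)
        then show "b \<odot>\<^bsub>M'\<^esub> y \<in> f ` Q" using f_smult[OF bc x(1)] x(2) by simp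
      qed
      then show ?thesis by blast
    qed
  qed
qed

lemma cprime_image: "cprime_submodule R M Q \<Longrightarrow> ker \<subseteq> Q \<Longrightarrow> cprime_submodule R M' (f ` Q)"
proof -
  assume Q: "cprime_submodule R M Q" and K: "ker \<subseteq> Q"
  have Qs: "lsubmodule R M Q" and Qr: "\<not> RX_sub R M Q" using cprime_sub[OF Q] cprime_nRX[OF Q] by auto
  have pq: "pre (f ` Q) = Q" using pre_image[OF Qs K] .
  show ?thesis unfolding cprime_submodule_def
  proof (intro conjI ballI impI)
    show "lsubmodule R M' (f ` Q)" using sub_image Qs by auto
    show "\<not> RX_sub R M' (f ` Q)" using image_RX Qs K Qr by auto
    fix r y assume r: "r \<in> carrier R" and y: "y \<in> carrier M'" and H: "r \<odot>\<^bsub>M'\<^esub> y \<in> f ` Q"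
    obtain x where x: "x \<in> carrier M" "y = f x" using y f_surj by blast
    have "f (r \<odot>\<^bsub>M\<^esub> x) \<in> f ` Q" using H f_smult[OF r x(1)] x(2) by simp
    then have "r \<odot>\<^bsub>M\<^esub> x \<in> pre (f ` Q)" using M.smult_closed[OF r x(1)] unfolding lmod_preim_def by blast
    then have "r \<odot>\<^bsub>M\<^esub> x \<in> Q" using pq by simp
    then have "x \<in> Q \<or> (\<forall>z\<in>carrier M. r \<odot>\<^bsub>M\<^esub> z \<in> Q)"
      using cprime_cond[OF Q r x(1)] by blast
    then show "y \<in> f ` Q \<or> (\<forall>z\<in>carrier M'. r \<odot>\<^bsub>M'\<^esub> z \<in> f ` Q)"
    proof
      assume "x \<in> Q" then show ?thesis using x(2) by blast
    next
      assume a: "\<forall>z\<in>carrier M. r \<odot>\<^bsub>M\<^esub> z \<in> Q"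
      have "\<forall>z\<in>carrier M'. r \<odot>\<^bsub>M'\<^esub> z \<in> f ` Q"
      proof
        fix z assume "z \<in> carrier M'"
        then obtain w where w: "w \<in> carrier M" "z = f w" using f_surj by blast
        have "r \<odot>\<^bsub>M\<^esub> w \<in> Q" using a w(1) by blast
        then have "f (r \<odot>\<^bsub>M\<^esub> w) \<in> f ` Q" by (rule imageI)
        then show "r \<odot>\<^bsub>M'\<^esub> z \<in> f ` Q" using f_smult[OF r w(1)] w(2) by simp
      qed
      then show ?thesis by blast
    qed
  qed
qed

lemma S_eq: "K \<subseteq> carrier M \<Longrightarrow> ker \<subseteq> K \<Longrightarrow>
  {Q. prime_submodule R M Q \<and> K \<subseteq> Q} = pre ` {P. prime_submodule R M' P \<and> f ` K \<subseteq> P}"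
proof
  assume K: "K \<subseteq> carrier M" "ker \<subseteq> K"
  show "{Q. prime_submodule R M Q \<and> K \<subseteq> Q} \<subseteq> pre ` {P. prime_submodule R M' P \<and> f ` K \<subseteq> P}"
  proof
    fix Q assume "Q \<in> {Q. prime_submodule R M Q \<and> K \<subseteq> Q}"
    then have Q: "prime_submodule R M Q" "K \<subseteq> Q" by auto
    then have "pre (f ` Q) = Q" using pre_image[OF prime_sub[OF Q(1)]] K Q(2) by auto
    moreover have "prime_submodule R M' (f ` Q)" using prime_image Q K by auto
    ultimately show "Q \<in> pre ` {P. prime_submodule R M' P \<and> f ` K \<subseteq> P}"
      using Q by (metis (mono_tags, lifting) image_eqI image_mono mem_Collect_eq)
  qed
  show "pre ` {P. prime_submodule R M' P \<and> f ` K \<subseteq> P} \<subseteq> {Q. prime_submodule R M Q \<and> K \<subseteq> Q}"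
    using prime_pre K unfolding lmod_preim_def by auto
qed

lemma S_eq_co: "K \<subseteq> carrier M \<Longrightarrow> ker \<subseteq> K \<Longrightarrow>
  {Q. cprime_submodule R M Q \<and> K \<subseteq> Q} = pre ` {P. cprime_submodule R M' P \<and> f ` K \<subseteq> P}"
proof
  assume K: "K \<subseteq> carrier M" "ker \<subseteq> K"
  show "{Q. cprime_submodule R M Q \<and> K \<subseteq> Q} \<subseteq> pre ` {P. cprime_submodule R M' P \<and> f ` K \<subseteq> P}"
  proof
    fix Q assume "Q \<in> {Q. cprime_submodule R M Q \<and> K \<subseteq> Q}"
    then have Q: "cprime_submodule R M Q" "K \<subseteq> Q" by auto
    then have "pre (f ` Q) = Q" using pre_image[OF cprime_sub[OF Q(1)]] K Q(2) by auto
    moreover have "cprime_submodule R M' (f ` Q)" using cprime_image Q K by auto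
    ultimately show "Q \<in> pre ` {P. cprime_submodule R M' P \<and> f ` K \<subseteq> P}"
      using Q by (metis (mono_tags, lifting) image_eqI image_mono mem_Collect_eq)
  qed
  show "pre ` {P. cprime_submodule R M' P \<and> f ` K \<subseteq> P} \<subseteq> {Q. cprime_submodule R M Q \<and> K \<subseteq> Q}"
    using cprime_pre K unfolding lmod_preim_def by auto
qed

lemma pre_Inter: "S \<noteq> {} \<Longrightarrow> pre (\<Inter> S) = \<Inter> (pre ` S)"
  unfolding lmod_preim_def by auto

lemma beta_s_pre: "K \<subseteq> carrier M \<Longrightarrow> ker \<subseteq> K \<Longrightarrow> pre (beta_s R M' (f ` K)) = beta_s R M K"
  unfolding beta_s_def using S_eq[of K] pre_Inter
  by (auto simp: lmod_preim_def f_closed)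

lemma beta_co_pre: "K \<subseteq> carrier M \<Longrightarrow> ker \<subseteq> K \<Longrightarrow> pre (beta_co R M' (f ` K)) = beta_co R M K"
  unfolding beta_co_def using S_eq_co[of K] pre_Inter
  by (auto simp: lmod_preim_def f_closed)

lemma E_image: "lsubmodule R M K \<Longrightarrow> ker \<subseteq> K \<Longrightarrow> f ` E_set R M K = E_set R M' (f ` K)"
proof
  assume K: "lsubmodule R M K" "ker \<subseteq> K"
  show "f ` E_set R M K \<subseteq> E_set R M' (f ` K)"
  proof
    fix y assume "y \<in> f ` E_set R M K"
    then obtain r x k where rx: "r \<in> carrier R" "x \<in> carrier M" "k \<ge> (1::nat)"
      "(r [^]\<^bsub>R\<^esub> k) \<odot>\<^bsub>M\<^esub> x \<in> K" "y = f (r \<odot>\<^bsub>M\<^esub> x)"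
      unfolding E_set_def by auto
    have "y = r \<odot>\<^bsub>M'\<^esub> f x" using rx f_smult by auto
    moreover have "(r [^]\<^bsub>R\<^esub> k) \<odot>\<^bsub>M'\<^esub> f x \<in> f ` K"
      using rx f_smult[of "r [^]\<^bsub>R\<^esub> k" x] by (metis M.R.nat_pow_closed imageI)
    ultimately show "y \<in> E_set R M' (f ` K)" unfolding E_set_def
      using rx f_closed by blast
  qed
  show "E_set R M' (f ` K) \<subseteq> f ` E_set R M K"
  proof
    fix y assume "y \<in> E_set R M' (f ` K)"
    then obtain r z k where rz: "r \<in> carrier R" "z \<in> carrier M'" "k \<ge> (1::nat)"
      "(r [^]\<^bsub>R\<^esub> k) \<odot>\<^bsub>M'\<^esub> z \<in> f ` K" "y = r \<odot>\<^bsub>M'\<^esub> z"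
      unfolding E_set_def by auto
    obtain x where x: "x \<in> carrier M" "z = f x" using rz f_surj by auto
    have rk: "r [^]\<^bsub>R\<^esub> k \<in> carrier R" using rz by simp
    have "(r [^]\<^bsub>R\<^esub> k) \<odot>\<^bsub>M\<^esub> x \<in> pre (f ` K)"
      using rz x rk f_smult M.smult_closed unfolding lmod_preim_def by auto
    then have "(r [^]\<^bsub>R\<^esub> k) \<odot>\<^bsub>M\<^esub> x \<in> K" using pre_image K by simp
    then have "r \<odot>\<^bsub>M\<^esub> x \<in> E_set R M K" unfolding E_set_def using rz x by blast
    moreover have "y = f (r \<odot>\<^bsub>M\<^esub> x)" using rz x f_smult by auto
    ultimately show "y \<in> f ` E_set R M K" by auto
  qed
qed

lemma gen_pre: "S \<subseteq> carrier M \<Longrightarrow> ker \<subseteq> S \<Longrightarrow>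
   pre (gen_submodule R M' (f ` S)) = gen_submodule R M S"
proof
  assume S: "S \<subseteq> carrier M" "ker \<subseteq> S"
  let ?G = "gen_submodule R M S"
  have Gs: "lsubmodule R M ?G" using M.gen_sub S by auto
  have GS: "S \<subseteq> ?G" using M.gen_incl by auto
  have "f ` S \<subseteq> f ` ?G" using GS by auto
  then have "gen_submodule R M' (f ` S) \<subseteq> f ` ?G" using M2.gen_least sub_image Gs by auto
  then have "pre (gen_submodule R M' (f ` S)) \<subseteq> pre (f ` ?G)" unfolding lmod_preim_def by auto
  also have "\<dots> = ?G" using pre_image Gs GS S by auto
  finally show "pre (gen_submodule R M' (f ` S)) \<subseteq> ?G" .
  have fS: "f ` S \<subseteq> carrier M'" using S f_closed by auto
  have "lsubmodule R M (pre (gen_submodule R M' (f ` S)))" using sub_pre M2.gen_sub fS by auto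
  moreover have "S \<subseteq> pre (gen_submodule R M' (f ` S))"
    using S M2.gen_incl[of "f ` S"] unfolding lmod_preim_def by blast
  ultimately show "?G \<subseteq> pre (gen_submodule R M' (f ` S))" using M.gen_least by auto
qed

end

theorem lemma4p14:
  fixes R :: "('r, 'c) ring_scheme"
    and M :: "('r, 'a, 'd) module_scheme"
    and M' :: "('r, 'b, 'e) module_scheme"
    and \<phi> :: "'a \<Rightarrow> 'b"
    and N :: "'a set"
  assumes "lmodule R M" and "lmodule R M'"
    and "lmod_epi R M M' \<phi>"
    and "lsubmodule R M N"
    and "lmod_ker M M' \<phi> \<subseteq> N"
  shows "(beta_co R M N = gen_submodule R M (E_set R M N) \<longrightarrow>
            beta_co R M' (\<phi> ` N) = gen_submodule R M' (E_set R M' (\<phi> ` N)))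
       \<and> (\<forall>N'. lsubmodule R M' N' \<longrightarrow>
            beta_co R M' N' = gen_submodule R M' (E_set R M' N') \<longrightarrow>
            beta_co R M (lmod_preim M \<phi> N') = gen_submodule R M (E_set R M (lmod_preim M \<phi> N')))
       \<and> (beta_s R M N = gen_submodule R M (E_set R M N) \<longrightarrow>
            beta_s R M' (\<phi> ` N) = gen_submodule R M' (E_set R M' (\<phi> ` N)))
       \<and> (\<forall>N'. lsubmodule R M' N' \<longrightarrow>
            beta_s R M' N' = gen_submodule R M' (E_set R M' N') \<longrightarrow>
            beta_s R M (lmod_preim M \<phi> N') = gen_submodule R M (E_set R M (lmod_preim M \<phi> N')))"
proof -
  interpret epi R M M' \<phi> using assms(1,2,3) by (simp add: epi.intro epi_axioms.intro)
  have Nc: "N \<subseteq> carrier M" using lsub_carrier[OF assms(4)] .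
  have NE: "N \<subseteq> E_set R M N" using M.E_incl Nc by auto
  have g1: "\<phi> ` gen_submodule R M (E_set R M N) = gen_submodule R M' (E_set R M' (\<phi> ` N))"
  proof -
    have "\<phi> ` gen_submodule R M (E_set R M N) = \<phi> ` pre (gen_submodule R M' (\<phi> ` E_set R M N))"
      using gen_pre[of "E_set R M N"] M.E_carrier NE assms(5) by auto
    also have "\<dots> = gen_submodule R M' (\<phi> ` E_set R M N)"
      using image_pre M2.gen_carrier f_closed M.E_carrier by (meson image_subsetI subsetD)
    also have "\<dots> = gen_submodule R M' (E_set R M' (\<phi> ` N))" using E_image assms(4,5) by simp
    finally show ?thesis .
  qed
  have g2: "pre (gen_submodule R M' (E_set R M' (\<phi> ` K))) = gen_submodule R M (E_set R M K)"
    if K: "lsubmodule R M K" "lmod_ker M M' \<phi> \<subseteq> K" for K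
  proof -
    have Kc: "K \<subseteq> carrier M" using lsub_carrier[OF K(1)] .
    have "pre (gen_submodule R M' (E_set R M' (\<phi> ` K))) = pre (gen_submodule R M' (\<phi> ` E_set R M K))"
      using E_image K by simp
    also have "\<dots> = gen_submodule R M (E_set R M K)"
      using gen_pre[of "E_set R M K"] M.E_carrier M.E_incl[OF Kc] K by auto
    finally show ?thesis .
  qed
  have pK: "lsubmodule R M (pre N') \<and> lmod_ker M M' \<phi> \<subseteq> pre N' \<and> \<phi> ` pre N' = N' \<and> pre N' \<subseteq> carrier M"
    if "lsubmodule R M' N'" for N'
    using that sub_pre ker_pre image_pre pre_carrier lsubmodule_def by metis
  show ?thesis
  proof (intro conjI allI impI)
    assume h: "beta_co R M N = gen_submodule R M (E_set R M N)"
    have "beta_co R M' (\<phi> ` N) = \<phi> ` pre (beta_co R M' (\<phi> ` N))"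
      using image_pre[OF M2.beta_co_carrier] by simp
    also have "\<dots> = \<phi> ` beta_co R M N" using beta_co_pre Nc assms(5) by simp
    finally show "beta_co R M' (\<phi> ` N) = gen_submodule R M' (E_set R M' (\<phi> ` N))" using h g1 by simp
  next
    fix N' assume N': "lsubmodule R M' N'" and h: "beta_co R M' N' = gen_submodule R M' (E_set R M' N')"
    note p = pK[OF N']
    have p1: "lsubmodule R M (pre N')" and p2: "lmod_ker M M' \<phi> \<subseteq> pre N'" and p4: "pre N' \<subseteq> carrier M"
      using p by auto
    have "beta_co R M (pre N') = pre (beta_co R M' (\<phi> ` pre N'))" by (rule sym[OF beta_co_pre[OF p4 p2]])
    also have "\<dots> = pre (gen_submodule R M' (E_set R M' (\<phi> ` pre N')))" using p h by simp
    also have "\<dots> = gen_submodule R M (E_set R M (pre N'))" by (rule g2[OF p1 p2])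
    finally show "beta_co R M (lmod_preim M \<phi> N') = gen_submodule R M (E_set R M (lmod_preim M \<phi> N'))" .
  next
    assume h: "beta_s R M N = gen_submodule R M (E_set R M N)"
    have "beta_s R M' (\<phi> ` N) = \<phi> ` pre (beta_s R M' (\<phi> ` N))"
      using image_pre[OF M2.beta_s_carrier] by simp
    also have "\<dots> = \<phi> ` beta_s R M N" using beta_s_pre Nc assms(5) by simp
    finally show "beta_s R M' (\<phi> ` N) = gen_submodule R M' (E_set R M' (\<phi> ` N))" using h g1 by simp
  next
    fix N' assume N': "lsubmodule R M' N'" and h: "beta_s R M' N' = gen_submodule R M' (E_set R M' N')"
    note p = pK[OF N']
    have p1: "lsubmodule R M (pre N')" and p2: "lmod_ker M M' \<phi> \<subseteq> pre N'" and p4: "pre N' \<subseteq> carrier M"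
      using p by auto
    have "beta_s R M (pre N') = pre (beta_s R M' (\<phi> ` pre N'))" by (rule sym[OF beta_s_pre[OF p4 p2]])
    also have "\<dots> = pre (gen_submodule R M' (E_set R M' (\<phi> ` pre N')))" using p h by simp
    also have "\<dots> = gen_submodule R M (E_set R M (pre N'))" by (rule g2[OF p1 p2])
    finally show "beta_s R M (lmod_preim M \<phi> N') = gen_submodule R M (E_set R M (lmod_preim M \<phi> N'))" .
  qed
qed


end
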